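(* Let $\mathfrak{g}$ be a finite-dimensional complete Lie algebra over a field $K$ of characteristic zero. Then every CPA-structure on $\mathfrak{g}$ is inner.
   Context: A Lie algebra is complete if its center is trivial and all its derivations are inner. A CPA-structure on $\mathfrak{g}$ is a bilinear product $x\cdot y$ satisfying, for all $x,y,z$: $x\cdot y=y\cdot x$; $[x,y]\cdot z=x\cdot(y\cdot z)-y\cdot(x\cdot z)$; $x\cdot[y,z]=[x\cdot y,z]+[y,x\cdot z]$. It is inner if $x\cdot y=[\phi(x),y]$ for all $x,y$ for some Lie algebra homomorphism $\phi:\mathfrak{g}\to\mathfrak{g}$. *)

theory Defs
  imports Complex_Main
begin

definition lie_algebra :: "('k::field \<Rightarrow> 'v::ab_group_add \<Rightarrow> 'v) \<Rightarrow> ('v \<Rightarrow> 'v \<Rightarrow> 'v) \<Rightarrow> bool" where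
  "lie_algebra scale br \<longleftrightarrow>
     Vector_Spaces.vector_space scale \<and>
     (\<forall>x y z. br (x + y) z = br x z + br y z) \<and>
     (\<forall>x y z. br x (y + z) = br x y + br x z) \<and>
     (\<forall>a x y. br (scale a x) y = scale a (br x y)) \<and>
     (\<forall>a x y. br x (scale a y) = scale a (br x y)) \<and>
     (\<forall>x. br x x = 0) \<and>
     (\<forall>x y z. br x (br y z) + br y (br z x) + br z (br x y) = 0)"

definition finite_dim :: "('k::field \<Rightarrow> 'v::ab_group_add \<Rightarrow> 'v) \<Rightarrow> bool" where
  "finite_dim scale \<longleftrightarrow> (\<exists>B. finite B \<and> module.span scale B = UNIV)"

definition lie_derivation :: "('k::field \<Rightarrow> 'v::ab_group_add \<Rightarrow> 'v) \<Rightarrow> ('v \<Rightarrow> 'v \<Rightarrow> 'v) \<Rightarrow> ('v \<Rightarrow> 'v) \<Rightarrow> bool" where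
  "lie_derivation scale br D \<longleftrightarrow>
     Vector_Spaces.linear scale scale D \<and> (\<forall>x y. D (br x y) = br (D x) y + br x (D y))"

definition inner_derivation :: "('v \<Rightarrow> 'v \<Rightarrow> 'v) \<Rightarrow> ('v \<Rightarrow> 'v) \<Rightarrow> bool" where
  "inner_derivation br D \<longleftrightarrow> (\<exists>a. D = (\<lambda>x. br a x))"

definition complete_lie :: "('k::field \<Rightarrow> 'v::ab_group_add \<Rightarrow> 'v) \<Rightarrow> ('v \<Rightarrow> 'v \<Rightarrow> 'v) \<Rightarrow> bool" where
  "complete_lie scale br \<longleftrightarrow>
     (\<forall>z. (\<forall>x. br z x = 0) \<longrightarrow> z = 0) \<and>
     (\<forall>D. lie_derivation scale br D \<longrightarrow> inner_derivation br D)"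

definition lie_hom :: "('k::field \<Rightarrow> 'v::ab_group_add \<Rightarrow> 'v) \<Rightarrow> ('v \<Rightarrow> 'v \<Rightarrow> 'v) \<Rightarrow> ('v \<Rightarrow> 'v) \<Rightarrow> bool" where
  "lie_hom scale br \<phi> \<longleftrightarrow>
     Vector_Spaces.linear scale scale \<phi> \<and> (\<forall>x y. \<phi> (br x y) = br (\<phi> x) (\<phi> y))"

definition cpa_structure :: "('k::field \<Rightarrow> 'v::ab_group_add \<Rightarrow> 'v) \<Rightarrow> ('v \<Rightarrow> 'v \<Rightarrow> 'v) \<Rightarrow> ('v \<Rightarrow> 'v \<Rightarrow> 'v) \<Rightarrow> bool" where
  "cpa_structure scale br pr \<longleftrightarrow>
     (\<forall>x y z. pr (x + y) z = pr x z + pr y z) \<and>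
     (\<forall>x y z. pr x (y + z) = pr x y + pr x z) \<and>
     (\<forall>a x y. pr (scale a x) y = scale a (pr x y)) \<and>
     (\<forall>a x y. pr x (scale a y) = scale a (pr x y)) \<and>
     (\<forall>x y. pr x y = pr y x) \<and>
     (\<forall>x y z. pr (br x y) z = pr x (pr y z) - pr y (pr x z)) \<and>
     (\<forall>x y z. pr x (br y z) = br (pr x y) z + br y (pr x z))"

definition inner_cpa :: "('k::field \<Rightarrow> 'v::ab_group_add \<Rightarrow> 'v) \<Rightarrow> ('v \<Rightarrow> 'v \<Rightarrow> 'v) \<Rightarrow> ('v \<Rightarrow> 'v \<Rightarrow> 'v) \<Rightarrow> bool" where
  "inner_cpa scale br pr \<longleftrightarrow> (\<exists>\<phi>. lie_hom scale br \<phi> \<and> (\<forall>x y. pr x y = br (\<phi> x) y))"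

end

theory Submission
  imports Defs
begin

theorem corollary2p9:
  fixes scale :: "'k::field_char_0 \<Rightarrow> 'v::ab_group_add \<Rightarrow> 'v"
    and br :: "'v \<Rightarrow> 'v \<Rightarrow> 'v"
    and pr :: "'v \<Rightarrow> 'v \<Rightarrow> 'v"
  assumes "lie_algebra scale br"
    and "finite_dim scale"
    and "complete_lie scale br"
    and "cpa_structure scale br pr"
  shows "inner_cpa scale br pr"
proof -
  note L = assms(1)[unfolded lie_algebra_def]
  note C = assms(3)[unfolded complete_lie_def]
  note P = assms(4)[unfolded cpa_structure_def]
  have vs: "Vector_Spaces.vector_space scale" using L by blast
  have badd: "br (x + y) z = br x z + br y z" for x y z using L by blast
  have bsc: "br (scale a x) y = scale a (br x y)" for a x y using L by blast
  have bsc2: "br x (scale a y) = scale a (br x y)" for a x y using L by blast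
  have badd2: "br x (y + z) = br x y + br x z" for x y z using L by blast
  have jac: "br x (br y z) + br y (br z x) + br z (br x y) = 0" for x y z using L by blast
  have bxx: "br x x = 0" for x using L by blast
  have anti: "br x y = - br y x" for x y
  proof -
    have "br (x+y) (x+y) = 0" by (rule bxx)
    hence "br x x + br y x + (br x y + br y y) = 0" by (simp add: badd badd2)
    thus ?thesis by (simp add: bxx eq_neg_iff_add_eq_0 add.commute)
  qed
  have b0: "br u 0 = 0" for u using badd2[of u 0 0] by simp
  have bneg2: "br u (- w) = - br u w" for u w
    using badd2[of u w "-w"] b0[of u] by (simp add: add_eq_0_iff)
  have bsub: "br (u - v) z = br u z - br v z" for u v z
    using badd[of "u - v" v z] by (simp add: eq_diff_eq)
  have inj: "u = v" if "\<And>z. br u z = br v z" for u v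
  proof -
    have "\<forall>z. br (u - v) z = 0" using that by (simp add: bsub)
    hence "u - v = 0" using C by blast
    thus ?thesis by simp
  qed
  have der: "lie_derivation scale br (pr x)" for x
  proof -
    have "Vector_Spaces.linear scale scale (pr x)" using P vs by (intro Vector_Spaces.linear_iff[THEN iffD2]) blast
    thus ?thesis unfolding lie_derivation_def using P by blast
  qed
  hence ex: "\<exists>a. pr x = br a" for x using C unfolding inner_derivation_def by blast
  define \<phi> where "\<phi> x = (SOME a. pr x = br a)" for x
  have phi: "pr x = br (\<phi> x)" for x unfolding \<phi>_def by (rule someI_ex[OF ex])
  have phi': "pr x y = br (\<phi> x) y" for x y using phi by metis
  have padd: "\<phi> (x + y) = \<phi> x + \<phi> y" for x y
    by (rule inj) (simp add: badd flip: phi' add: P)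
  have psc: "\<phi> (scale c x) = scale c (\<phi> x)" for c x
    by (rule inj) (simp add: bsc flip: phi' add: P)
  have pbr: "\<phi> (br x y) = br (\<phi> x) (\<phi> y)" for x y
  proof (rule inj)
    fix z
    have "br (\<phi> (br x y)) z = br (\<phi> x) (br (\<phi> y) z) - br (\<phi> y) (br (\<phi> x) z)"
    proof -
      have "pr (br x y) z = pr x (pr y z) - pr y (pr x z)" using P by blast
      thus ?thesis by (simp only: phi')
    qed
    also have "\<dots> = br (br (\<phi> x) (\<phi> y)) z"
    proof -
      have j: "br (\<phi> x) (br (\<phi> y) z) + br (\<phi> y) (br z (\<phi> x)) + br z (br (\<phi> x) (\<phi> y)) = 0"
        by (rule jac)
      have "br (\<phi> y) (br z (\<phi> x)) = br (\<phi> y) (- br (\<phi> x) z)"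
        by (simp only: anti[of z "\<phi> x"])
      also have "\<dots> = - br (\<phi> y) (br (\<phi> x) z)" by (rule bneg2)
      finally have e1: "br (\<phi> y) (br z (\<phi> x)) = - br (\<phi> y) (br (\<phi> x) z)" .
      have e2: "br z (br (\<phi> x) (\<phi> y)) = - br (br (\<phi> x) (\<phi> y)) z" by (rule anti)
      from j have "br (\<phi> x) (br (\<phi> y) z) - br (\<phi> y) (br (\<phi> x) z) - br (br (\<phi> x) (\<phi> y)) z = 0"
        unfolding e1 e2 by (simp only: diff_conv_add_uminus)
      thus ?thesis by simp
    qed
    finally show "br (\<phi> (br x y)) z = br (br (\<phi> x) (\<phi> y)) z" .
  qed
  have "lie_hom scale br \<phi>"
  proof -
    have "Vector_Spaces.linear scale scale \<phi>" using vs padd psc by (intro Vector_Spaces.linear_iff[THEN iffD2]) blast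
    thus ?thesis unfolding lie_hom_def using pbr by blast
  qed
  thus ?thesis unfolding inner_cpa_def using phi' by blast
qed

end
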